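(* $(\mathbb{S},\sigma)$ is the final $F$-coalgebra in $\mathbf{Met_3}^{C}$.
   Context: A tripointed metric space is a set with three distinct points $T,L,R$ and a metric bounded by $1$ in which $T,L,R$ have pairwise distance $1$. $\mathbf{Met_3}^{C}$: tripointed metric spaces with continuous maps preserving $T,L,R$. Let $M=\{a,b,c\}$. For a tripointed metric space $X$, $M\times X$ has metric $d((m,x),(n,y))=\tfrac12d(x,y)$ if $m=n$ and $1$ otherwise; $M\otimes X$ is the quotient metric space by the equivalence relation generated by $(b,T)\sim(a,L)$, $(a,R)\sim(c,T)$, $(c,L)\sim(b,R)$, with elements $m\otimes x$ and distinguished points $a\otimes T,b\otimes L,c\otimes R$; $F=M\otimes-$ with $(M\otimes f)(m\otimes x)=m\otimes f(x)$. A coalgebra is $(X,e\colon X\to FX)$; it is final if every coalgebra has a unique coalgebra morphism $h$ into it ($\beta\circ h=Fh\circ\alpha$). The Sierpinski gasket $\mathbb{S}\subset\mathbb{R}^2$ is the unique nonempty compact set with $\mathbb{S}=\sigma_a(\mathbb{S})\cup\sigma_b(\mathbb{S})\cup\sigma_c(\mathbb{S})$, where $\sigma_a(x,y)=(x/2,y/2)+(1/4,\sqrt3/4)$, $\sigma_b(x,y)=(x/2,y/2)$, $\sigma_c(x,y)=(x/2,y/2)+(1/2,0)$; it carries the Euclidean metric and distinguished points $T=(1/2,\sqrt3/2)$, $L=(0,0)$, $R=(1,0)$. The map $\tau\colon M\otimes\mathbb{S}\to\mathbb{S}$, $\tau(m\otimes x)=\sigma_m(x)$, is a bijection preserving distinguished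 points, and $\sigma=\tau^{-1}\colon\mathbb{S}\to M\otimes\mathbb{S}$. *)

theory Defs
  imports "HOL-Analysis.Analysis"
begin

definition tripointed :: "'a set \<Rightarrow> ('a \<Rightarrow> 'a \<Rightarrow> real) \<Rightarrow> 'a \<Rightarrow> 'a \<Rightarrow> 'a \<Rightarrow> bool" where
  "tripointed X d T L R \<longleftrightarrow>
     Metric_space X d \<and> (\<forall>x\<in>X. \<forall>y\<in>X. d x y \<le> 1) \<and>
     T \<in> X \<and> L \<in> X \<and> R \<in> X \<and> d T L = 1 \<and> d T R = 1 \<and> d L R = 1"

definition metric_cont :: "'a set \<Rightarrow> ('a \<Rightarrow> 'a \<Rightarrow> real) \<Rightarrow> 'b set \<Rightarrow> ('b \<Rightarrow> 'b \<Rightarrow> real) \<Rightarrow> ('a \<Rightarrow> 'b) \<Rightarrow> bool" where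
  "metric_cont X dX Y dY f \<longleftrightarrow> f ` X \<subseteq> Y \<and>
     (\<forall>x\<in>X. \<forall>e>0. \<exists>\<delta>>0. \<forall>y\<in>X. dX x y < \<delta> \<longrightarrow> dY (f x) (f y) < e)"

definition met3_mor ::
  "'a set \<Rightarrow> ('a \<Rightarrow> 'a \<Rightarrow> real) \<Rightarrow> 'a \<Rightarrow> 'a \<Rightarrow> 'a \<Rightarrow>
   'b set \<Rightarrow> ('b \<Rightarrow> 'b \<Rightarrow> real) \<Rightarrow> 'b \<Rightarrow> 'b \<Rightarrow> 'b \<Rightarrow> ('a \<Rightarrow> 'b) \<Rightarrow> bool" where
  "met3_mor X dX TX LX RX Y dY TY LY RY f \<longleftrightarrow>
     metric_cont X dX Y dY f \<and> f TX = TY \<and> f LX = LY \<and> f RX = RY"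

datatype mlab = Ma | Mb | Mc

definition prod_dist :: "('a \<Rightarrow> 'a \<Rightarrow> real) \<Rightarrow> mlab \<times> 'a \<Rightarrow> mlab \<times> 'a \<Rightarrow> real" where
  "prod_dist d p q = (if fst p = fst q then d (snd p) (snd q) / 2 else 1)"

definition glue_gen :: "'a \<Rightarrow> 'a \<Rightarrow> 'a \<Rightarrow> ((mlab \<times> 'a) \<times> (mlab \<times> 'a)) set" where
  "glue_gen T L R = {((Mb,T),(Ma,L)), ((Ma,R),(Mc,T)), ((Mc,L),(Mb,R))}"

definition glue_rel :: "'a set \<Rightarrow> 'a \<Rightarrow> 'a \<Rightarrow> 'a \<Rightarrow> ((mlab \<times> 'a) \<times> (mlab \<times> 'a)) set" where
  "glue_rel X T L R = Id_on (UNIV \<times> X) \<union> (glue_gen T L R \<union> (glue_gen T L R)\<inverse>)\<^sup>+"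

definition quot_dist :: "'a set \<Rightarrow> ('a \<Rightarrow> 'a \<Rightarrow> real) \<Rightarrow> ('a \<times> 'a) set \<Rightarrow> 'a set \<Rightarrow> 'a set \<Rightarrow> real" where
  "quot_dist S d E P Q = Inf {(\<Sum>i\<le>n. d (p i) (q i)) | p q n.
       (\<forall>i\<le>n. p i \<in> S \<and> q i \<in> S) \<and> p 0 \<in> P \<and> q n \<in> Q \<and>
       (\<forall>i<n. (q i, p (Suc i)) \<in> E)}"

definition tens_carrier :: "'a set \<Rightarrow> 'a \<Rightarrow> 'a \<Rightarrow> 'a \<Rightarrow> (mlab \<times> 'a) set set" where
  "tens_carrier X T L R = (UNIV \<times> X) // glue_rel X T L R"

definition tens_dist :: "'a set \<Rightarrow> ('a \<Rightarrow> 'a \<Rightarrow> real) \<Rightarrow> 'a \<Rightarrow> 'a \<Rightarrow> 'a \<Rightarrow>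
    (mlab \<times> 'a) set \<Rightarrow> (mlab \<times> 'a) set \<Rightarrow> real" where
  "tens_dist X d T L R = quot_dist (UNIV \<times> X) (prod_dist d) (glue_rel X T L R)"

definition tens_el :: "'a set \<Rightarrow> 'a \<Rightarrow> 'a \<Rightarrow> 'a \<Rightarrow> mlab \<Rightarrow> 'a \<Rightarrow> (mlab \<times> 'a) set" where
  "tens_el X T L R m x = glue_rel X T L R `` {(m, x)}"

text \<open>F on morphisms: (M \<otimes> f)(m \<otimes> x) = m \<otimes> f x (target space Y with points TY LY RY).\<close>
definition tens_map :: "'b set \<Rightarrow> 'b \<Rightarrow> 'b \<Rightarrow> 'b \<Rightarrow> ('a \<Rightarrow> 'b) \<Rightarrow>
    (mlab \<times> 'a) set \<Rightarrow> (mlab \<times> 'b) set" where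
  "tens_map Y TY LY RY f P = glue_rel Y TY LY RY `` ((\<lambda>(m, x). (m, f x)) ` P)"

definition coalg :: "'a set \<Rightarrow> ('a \<Rightarrow> 'a \<Rightarrow> real) \<Rightarrow> 'a \<Rightarrow> 'a \<Rightarrow> 'a \<Rightarrow> ('a \<Rightarrow> (mlab \<times> 'a) set) \<Rightarrow> bool" where
  "coalg X d T L R e \<longleftrightarrow> tripointed X d T L R \<and>
     met3_mor X d T L R (tens_carrier X T L R) (tens_dist X d T L R)
       (tens_el X T L R Ma T) (tens_el X T L R Mb L) (tens_el X T L R Mc R) e"

definition coalg_mor ::
  "'a set \<Rightarrow> ('a \<Rightarrow> 'a \<Rightarrow> real) \<Rightarrow> 'a \<Rightarrow> 'a \<Rightarrow> 'a \<Rightarrow> ('a \<Rightarrow> (mlab \<times> 'a) set) \<Rightarrow>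
   'b set \<Rightarrow> ('b \<Rightarrow> 'b \<Rightarrow> real) \<Rightarrow> 'b \<Rightarrow> 'b \<Rightarrow> 'b \<Rightarrow> ('b \<Rightarrow> (mlab \<times> 'b) set) \<Rightarrow>
   ('a \<Rightarrow> 'b) \<Rightarrow> bool" where
  "coalg_mor X dX TX LX RX e Y dY TY LY RY f h \<longleftrightarrow>
     met3_mor X dX TX LX RX Y dY TY LY RY h \<and>
     (\<forall>x\<in>X. f (h x) = tens_map Y TY LY RY h (e x))"

definition sig :: "mlab \<Rightarrow> real \<times> real \<Rightarrow> real \<times> real" where
  "sig m p = (case m of
      Ma \<Rightarrow> (fst p / 2 + 1/4, snd p / 2 + sqrt 3 / 4)
    | Mb \<Rightarrow> (fst p / 2, snd p / 2)
    | Mc \<Rightarrow> (fst p / 2 + 1/2, snd p / 2))"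

definition gasket :: "(real \<times> real) set" where
  "gasket = (THE S. S \<noteq> {} \<and> compact S \<and> S = sig Ma ` S \<union> sig Mb ` S \<union> sig Mc ` S)"

definition gT :: "real \<times> real" where "gT = (1/2, sqrt 3 / 2)"
definition gL :: "real \<times> real" where "gL = (0, 0)"
definition gR :: "real \<times> real" where "gR = (1, 0)"

text \<open>tau (m \<otimes> x) = sig m x, and sigma = tau inverse.\<close>
definition gtau :: "(mlab \<times> (real \<times> real)) set \<Rightarrow> real \<times> real" where
  "gtau P = (THE y. \<exists>(m, x)\<in>P. y = sig m x)"

definition gsigma :: "real \<times> real \<Rightarrow> (mlab \<times> (real \<times> real)) set" where
  "gsigma = the_inv_into (tens_carrier gasket gT gL gR) gtau"

end

theory Submission
  imports Defs
begin


definition vtx :: "mlab \<Rightarrow> real \<times> real" where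
  "vtx m = (case m of Ma \<Rightarrow> gT | Mb \<Rightarrow> gL | Mc \<Rightarrow> gR)"

lemma sig_mid: "sig m p = (1/2) *\<^sub>R (p + vtx m)"
  by (cases m; cases p) (auto simp: sig_def vtx_def gT_def gL_def gR_def)

lemma dist_sig: "dist (sig m p) (sig m q) = dist p q / 2"
proof -
  have "sig m p - sig m q = (1/2) *\<^sub>R (p - q)" by (simp add: sig_mid algebra_simps)
  then show ?thesis by (simp add: dist_norm)
qed

lemma sig_inj: "sig m p = sig m q \<Longrightarrow> p = q"
  using dist_sig[of m p q] by simp

lemma continuous_sig: "continuous_on A (sig m)"
  unfolding sig_mid by (intro continuous_intros)

lemma sig_vtx: "sig m (vtx m) = vtx m"
  by (simp add: sig_mid scaleR_2[symmetric])

lemma sig_fix: "sig Ma gT = gT" "sig Mb gL = gL" "sig Mc gR = gR"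
  using sig_vtx[of Ma] sig_vtx[of Mb] sig_vtx[of Mc] by (auto simp: vtx_def)

lemma sig_glue: "sig Mb gT = sig Ma gL" "sig Ma gR = sig Mc gT" "sig Mc gL = sig Mb gR"
  by (auto simp: sig_def gT_def gL_def gR_def)

definition T0 :: "(real \<times> real) set" where "T0 = convex hull {gT, gL, gR}"

lemma T0_param: "T0 = {(u/2 + w, u * sqrt 3 / 2) | u w. 0 \<le> u \<and> 0 \<le> w \<and> u + w \<le> 1}"
proof -
  have "T0 = { u *\<^sub>R gT + v *\<^sub>R gL + w *\<^sub>R gR | u v w. 0 \<le> u \<and> 0 \<le> v \<and> 0 \<le> w \<and> u + v + w = 1}"
    unfolding T0_def by (rule convex_hull_3)
  also have "\<dots> = {(u/2 + w, u * sqrt 3 / 2) | u w. 0 \<le> u \<and> 0 \<le> w \<and> u + w \<le> 1}"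
  proof (intro set_eqI iffI)
    fix x assume "x \<in> { u *\<^sub>R gT + v *\<^sub>R gL + w *\<^sub>R gR | u v w. 0 \<le> u \<and> 0 \<le> v \<and> 0 \<le> w \<and> u + v + w = 1}"
    then obtain u v w where "0 \<le> u" "0 \<le> v" "0 \<le> w" "u + v + w = 1" "x = u *\<^sub>R gT + v *\<^sub>R gL + w *\<^sub>R gR" by blast
    then show "x \<in> {(u/2 + w, u * sqrt 3 / 2) | u w. 0 \<le> u \<and> 0 \<le> w \<and> u + w \<le> 1}"
      by (auto simp: gT_def gL_def gR_def intro!: exI[of _ u] exI[of _ w])
  next
    fix x assume "x \<in> {(u/2 + w, u * sqrt 3 / 2) | u w. 0 \<le> u \<and> 0 \<le> w \<and> u + w \<le> 1}"
    then obtain u w where "0 \<le> u" "0 \<le> w" "u + w \<le> 1" "x = (u/2 + w, u * sqrt 3 / 2)" by blast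
    moreover have "x = u *\<^sub>R gT + (1 - u - w) *\<^sub>R gL + w *\<^sub>R gR"
      using \<open>x = _\<close> by (simp add: gT_def gL_def gR_def)
    ultimately show "x \<in> { u *\<^sub>R gT + v *\<^sub>R gL + w *\<^sub>R gR | u v w. 0 \<le> u \<and> 0 \<le> v \<and> 0 \<le> w \<and> u + v + w = 1}"
    proof -
      have "0 \<le> 1 - u - w" "u + (1 - u - w) + w = 1" using \<open>u + w \<le> 1\<close> by auto
      then show ?thesis using \<open>0 \<le> u\<close> \<open>0 \<le> w\<close> \<open>x = u *\<^sub>R gT + (1 - u - w) *\<^sub>R gL + w *\<^sub>R gR\<close>
        by (intro CollectI exI[of _ u] exI[of _ "1 - u - w"] exI[of _ w]) simp
    qed
  qed
  finally show ?thesis .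
qed

lemma convex_T0: "convex T0" unfolding T0_def by simp
lemma compact_T0: "compact T0" unfolding T0_def by (simp add: finite_imp_compact_convex_hull)
lemma vtx_T0: "gT \<in> T0" "gL \<in> T0" "gR \<in> T0" "vtx m \<in> T0"
  unfolding T0_def by (auto simp: hull_inc vtx_def split: mlab.splits)

lemma sig_T0: "p \<in> T0 \<Longrightarrow> sig m p \<in> T0"
proof -
  assume "p \<in> T0"
  have "(1 - 1/2) *\<^sub>R p + (1/2) *\<^sub>R vtx m \<in> T0"
    by (rule convexD[OF convex_T0 \<open>p \<in> T0\<close> vtx_T0(4)]) auto
  then show ?thesis by (simp add: sig_mid algebra_simps)
qed

lemma dist_vtx: "dist gT gL = 1" "dist gT gR = 1" "dist gL gR = 1"
  by (auto simp: gT_def gL_def gR_def dist_Pair_Pair power_divide dist_real_def)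

lemma T0_diam: assumes "p \<in> T0" "q \<in> T0" shows "dist p q \<le> 1"
proof -
  have "T0 \<subseteq> cball v 1" if "v \<in> {gT,gL,gR}" for v
    unfolding T0_def using that dist_vtx by (intro hull_minimal) (auto simp: dist_commute)
  then have "dist v q \<le> 1" if "v \<in> {gT,gL,gR}" for v using assms(2) that by (meson mem_cball subsetD)
  then have "{gT,gL,gR} \<subseteq> cball q 1" by (auto simp: dist_commute)
  then have "T0 \<subseteq> cball q 1" unfolding T0_def by (intro hull_minimal) auto
  then show ?thesis using assms(1) by (auto simp: dist_commute)
qed

lemma glue_ab: assumes "p \<in> T0" "q \<in> T0" "sig Ma p = sig Mb q" shows "p = gL \<and> q = gT"
proof -
  obtain u1 w1 where 1: "0 \<le> u1" "0 \<le> w1" "u1 + w1 \<le> 1" "p = (u1/2 + w1, u1 * sqrt 3 / 2)"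
    using assms(1) unfolding T0_param by blast
  obtain u2 w2 where 2: "0 \<le> u2" "0 \<le> w2" "u2 + w2 \<le> 1" "q = (u2/2 + w2, u2 * sqrt 3 / 2)"
    using assms(2) unfolding T0_param by blast
  have e1: "u1/2 + w1 + 1/2 = u2/2 + w2" and e2: "u1 * sqrt 3 + sqrt 3 = u2 * sqrt 3"
    using assms(3) 1(4) 2(4) by (auto simp: sig_def field_simps)
  have "u1 + 1 = u2" using e2 by (metis distrib_right mult_1 mult_cancel_right real_sqrt_eq_zero_cancel_iff zero_neq_numeral)
  then have "u1 = 0" "u2 = 1" "w2 = 0" "w1 = 0" using 1 2 e1 by linarith+
  then show ?thesis using 1 2 by (simp add: gL_def gT_def)
qed

lemma glue_ac: assumes "p \<in> T0" "q \<in> T0" "sig Ma p = sig Mc q" shows "p = gR \<and> q = gT"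
proof -
  obtain u1 w1 where 1: "0 \<le> u1" "0 \<le> w1" "u1 + w1 \<le> 1" "p = (u1/2 + w1, u1 * sqrt 3 / 2)"
    using assms(1) unfolding T0_param by blast
  obtain u2 w2 where 2: "0 \<le> u2" "0 \<le> w2" "u2 + w2 \<le> 1" "q = (u2/2 + w2, u2 * sqrt 3 / 2)"
    using assms(2) unfolding T0_param by blast
  have e1: "u1/2 + w1 + 1/2 = u2/2 + w2 + 1" and e2: "u1 * sqrt 3 + sqrt 3 = u2 * sqrt 3"
    using assms(3) 1(4) 2(4) by (auto simp: sig_def field_simps)
  have "u1 + 1 = u2" using e2 by (metis distrib_right mult_1 mult_cancel_right real_sqrt_eq_zero_cancel_iff zero_neq_numeral)
  then have "u1 = 0" "u2 = 1" "w2 = 0" "w1 = 1" using 1 2 e1 by linarith+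
  then show ?thesis using 1 2 by (simp add: gR_def gT_def)
qed

lemma glue_bc: assumes "p \<in> T0" "q \<in> T0" "sig Mb p = sig Mc q" shows "p = gR \<and> q = gL"
proof -
  obtain u1 w1 where 1: "0 \<le> u1" "0 \<le> w1" "u1 + w1 \<le> 1" "p = (u1/2 + w1, u1 * sqrt 3 / 2)"
    using assms(1) unfolding T0_param by blast
  obtain u2 w2 where 2: "0 \<le> u2" "0 \<le> w2" "u2 + w2 \<le> 1" "q = (u2/2 + w2, u2 * sqrt 3 / 2)"
    using assms(2) unfolding T0_param by blast
  have e1: "u1/2 + w1 = u2/2 + w2 + 1" and e2: "u1 * sqrt 3 = u2 * sqrt 3"
    using assms(3) 1(4) 2(4) by (auto simp: sig_def field_simps)
  have "u1 = u2" using e2 by simp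
  then have "u1 = 0" "u2 = 0" "w2 = 0" "w1 = 1" using 1 2 e1 by linarith+
  then show ?thesis using 1 2 by (simp add: gR_def gL_def)
qed



lemma mlab_UNIV: "(UNIV :: mlab set) = {Ma, Mb, Mc}"
  using mlab.exhaust by auto

lemma Union_mlab: "(\<Union>m. f m) = f Ma \<union> f Mb \<union> f Mc"
  by (auto simp: mlab_UNIV)

fun Tn :: "nat \<Rightarrow> (real \<times> real) set" where
  "Tn 0 = T0"
| "Tn (Suc n) = (\<Union>m. sig m ` Tn n)"

definition S0 :: "(real \<times> real) set" where "S0 = (\<Inter>n. Tn n)"

lemma Tn_T0: "Tn n \<subseteq> T0"
  by (induction n) (auto simp: sig_T0)

lemma Tn_Suc_sub: "Tn (Suc n) \<subseteq> Tn n"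
proof (induction n)
  case 0 then show ?case by (auto simp: sig_T0)
next
  case (Suc n) then show ?case by (simp only: Tn.simps(2)) blast
qed

lemma Tn_anti: "n \<le> k \<Longrightarrow> Tn k \<subseteq> Tn n"
  by (rule lift_Suc_antimono_le[of Tn, OF Tn_Suc_sub])

lemma compact_Tn: "compact (Tn n)"
proof (induction n)
  case 0 then show ?case by (simp add: compact_T0)
next
  case (Suc n)
  have "compact (sig m ` Tn n)" for m by (rule compact_continuous_image[OF continuous_sig Suc])
  then show ?case unfolding Tn.simps Union_mlab by (intro compact_Un) auto
qed

lemma sig_Tn: "x \<in> Tn n \<Longrightarrow> sig m x \<in> Tn (Suc n)"
  by auto

lemma vtx_Tn: "gT \<in> Tn n \<and> gL \<in> Tn n \<and> gR \<in> Tn n"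
proof (induction n)
  case 0 then show ?case by (auto simp: vtx_T0)
next
  case (Suc n)
  then show ?case using sig_Tn[of gT n Ma] sig_Tn[of gL n Mb] sig_Tn[of gR n Mc] by (simp add: sig_fix)
qed

lemma S0_T0: "S0 \<subseteq> T0"
proof -
  have "S0 \<subseteq> Tn 0" unfolding S0_def by (rule INT_lower) simp
  then show ?thesis by simp
qed

lemma vtx_S0: "gT \<in> S0" "gL \<in> S0" "gR \<in> S0"
  unfolding S0_def using vtx_Tn by blast+

lemma compact_S0: "compact S0"
proof -
  have "closed S0" unfolding S0_def by (rule closed_INT) (simp add: compact_imp_closed compact_Tn)
  moreover have "bounded S0" by (rule bounded_subset[OF compact_imp_bounded[OF compact_T0] S0_T0])
  ultimately show ?thesis by (simp add: compact_eq_bounded_closed)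
qed

lemma S0_inv: "S0 = (\<Union>m. sig m ` S0)"
proof
  show "(\<Union>m. sig m ` S0) \<subseteq> S0"
  proof
    fix y assume "y \<in> (\<Union>m. sig m ` S0)"
    then obtain m z where z: "z \<in> S0" "y = sig m z" by blast
    have "y \<in> Tn n" for n
    proof -
      have "z \<in> Tn n" using z unfolding S0_def by blast
      then have "y \<in> Tn (Suc n)" using z by auto
      then show ?thesis using Tn_Suc_sub by blast
    qed
    then show "y \<in> S0" unfolding S0_def by blast
  qed
next
  show "S0 \<subseteq> (\<Union>m. sig m ` S0)"
  proof
    fix y assume y: "y \<in> S0"
    define u where "u m = 2 *\<^sub>R y - vtx m" for m
    have su: "sig m z = y \<longleftrightarrow> z = u m" for m z
    proof
      assume "sig m z = y"
      then have "2 *\<^sub>R y = z + vtx m" unfolding sig_mid by auto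
      then show "z = u m" unfolding u_def by (simp add: algebra_simps)
    next
      assume "z = u m"
      then have "z + vtx m = 2 *\<^sub>R y" unfolding u_def by simp
      then have "(1/2) *\<^sub>R (z + vtx m) = y" by simp
      then show "sig m z = y" unfolding sig_mid .
    qed
    have "\<exists>m. \<forall>n. u m \<in> Tn n"
    proof (rule ccontr)
      assume "\<not> ?thesis"
      then have "\<forall>m. \<exists>n. u m \<notin> Tn n" by blast
      then obtain N where N: "\<forall>m. u m \<notin> Tn (N m)" by (rule choice[THEN exE])
      define K where "K = N Ma + N Mb + N Mc"
      have "y \<in> Tn (Suc K)" using y unfolding S0_def by blast
      then obtain m z where "z \<in> Tn K" "y = sig m z" by auto
      then have "z = u m" using su[of m z] by metis
      then have "u m \<in> Tn K" using \<open>z \<in> Tn K\<close> by simp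
      have "N m \<le> K" unfolding K_def by (cases m) auto
      then have "Tn K \<subseteq> Tn (N m)" by (rule Tn_anti)
      then show False using N \<open>u m \<in> Tn K\<close> by auto
    qed
    then obtain m where "\<forall>n. u m \<in> Tn n" by blast
    then have "u m \<in> S0" unfolding S0_def by blast
    moreover have "sig m (u m) = y" using su by blast
    ultimately show "y \<in> (\<Union>m. sig m ` S0)" by blast
  qed
qed

lemma attractor_sub:
  assumes A: "compact A" "A \<noteq> {}" "A = (\<Union>m. sig m ` A)"
      and B: "compact B" "B \<noteq> {}" "B = (\<Union>m. sig m ` B)"
  shows "A \<subseteq> B"
proof -
  have "continuous_on A (\<lambda>a. infdist a B)" by (intro continuous_intros)
  then obtain a0 where a0: "a0 \<in> A" "\<And>a. a \<in> A \<Longrightarrow> infdist a B \<le> infdist a0 B"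
    using continuous_attains_sup[OF A(1) A(2)] by blast
  obtain m a' where a': "a' \<in> A" "a0 = sig m a'" using a0(1) A(3) by blast
  obtain b where b: "b \<in> B" "infdist a' B = dist a' b"
    using infdist_attains_inf[OF compact_imp_closed[OF B(1)] B(2)] by blast
  have "sig m b \<in> B" using b(1) B(3) by blast
  then have "infdist a0 B \<le> dist (sig m a') (sig m b)" unfolding a'(2) by (rule infdist_le)
  also have "\<dots> = infdist a' B / 2" using b by (simp add: dist_sig)
  also have "\<dots> \<le> infdist a0 B / 2" using a0(2) a'(1) by simp
  finally have "infdist a0 B \<le> 0" by simp
  then have "infdist a B = 0" if "a \<in> A" for a using a0(2)[OF that] infdist_nonneg[of a B] by linarith
  then show ?thesis using in_closed_iff_infdist_zero[OF compact_imp_closed[OF B(1)] B(2)] by blast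
qed

lemma gasket_S0: "gasket = S0"
proof -
  have P: "S0 \<noteq> {} \<and> compact S0 \<and> S0 = sig Ma ` S0 \<union> sig Mb ` S0 \<union> sig Mc ` S0"
    using vtx_S0 compact_S0 S0_inv Union_mlab[of "\<lambda>m. sig m ` S0"] by auto
  show ?thesis unfolding gasket_def
  proof (rule the_equality)
    show "S0 \<noteq> {} \<and> compact S0 \<and> S0 = sig Ma ` S0 \<union> sig Mb ` S0 \<union> sig Mc ` S0" by (rule P)
  next
    fix S assume S: "S \<noteq> {} \<and> compact S \<and> S = sig Ma ` S \<union> sig Mb ` S \<union> sig Mc ` S"
    then have S': "S = (\<Union>m. sig m ` S)" using Union_mlab[of "\<lambda>m. sig m ` S"] by auto
    have P': "S0 = (\<Union>m. sig m ` S0)" by (rule S0_inv)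
    have c: "compact S" "S \<noteq> {}" using S by auto
    have c0: "compact S0" "S0 \<noteq> {}" using P by auto
    show "S = S0"
      using attractor_sub[OF c S' c0 P'] attractor_sub[OF c0 P' c S'] by (rule antisym)
  qed
qed

lemma gasket_inv: "gasket = (\<Union>m. sig m ` gasket)"
  using S0_inv gasket_S0 by simp

lemma gasket_T0: "gasket \<subseteq> T0" using S0_T0 gasket_S0 by simp
lemma vtx_gasket: "gT \<in> gasket" "gL \<in> gasket" "gR \<in> gasket" using vtx_S0 gasket_S0 by auto
lemma compact_gasket: "compact gasket" using compact_S0 gasket_S0 by simp
lemma sig_gasket: "x \<in> gasket \<Longrightarrow> sig m x \<in> gasket"
proof -
  assume "x \<in> gasket"
  then have "sig m x \<in> (\<Union>m. sig m ` gasket)" by blast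
  then show ?thesis using gasket_inv by simp
qed
lemma gasket_diam: "x \<in> gasket \<Longrightarrow> y \<in> gasket \<Longrightarrow> dist x y \<le> 1"
  using gasket_T0 T0_diam by blast



abbreviation GG :: "'a \<Rightarrow> 'a \<Rightarrow> 'a \<Rightarrow> ((mlab \<times> 'a) \<times> (mlab \<times> 'a)) set" where
  "GG T L R \<equiv> glue_gen T L R \<union> (glue_gen T L R)\<inverse>"

lemma glue_rel_cases:
  assumes "(p, q) \<in> glue_rel X T L R"
  obtains "p = q" "p \<in> UNIV \<times> X" | "(p, q) \<in> (GG T L R)\<^sup>+"
  using assms unfolding glue_rel_def by auto

lemma GG_iff: "(p, q) \<in> GG T L R \<longleftrightarrow>
   (p = (Mb,T) \<and> q = (Ma,L)) \<or> (p = (Ma,L) \<and> q = (Mb,T)) \<or>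
   (p = (Ma,R) \<and> q = (Mc,T)) \<or> (p = (Mc,T) \<and> q = (Ma,R)) \<or>
   (p = (Mc,L) \<and> q = (Mb,R)) \<or> (p = (Mb,R) \<and> q = (Mc,L))"
  unfolding glue_gen_def by blast
lemma respect_GG:
  assumes "f (Mb,T) = f (Ma,L)" "f (Ma,R) = f (Mc,T)" "f (Mc,L) = f (Mb,R)"
      and "(p, q) \<in> GG T L R"
  shows "f p = f q"
  using assms(4) unfolding GG_iff using assms(1-3) by (elim disjE conjE) simp_all
lemma GG_partner:
  assumes "T \<noteq> L" "T \<noteq> R" "L \<noteq> R" "(p, q) \<in> GG T L R" "(p, q') \<in> GG T L R"
  shows "q = q'"
  using assms(4,5) unfolding GG_iff using assms(1-3) by (elim disjE conjE) simp_all
lemma GG_char: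
  assumes "T \<noteq> L" "T \<noteq> R" "L \<noteq> R"
  shows "trans (Id \<union> GG T L R)"
proof (rule transI)
  fix x y z assume a: "(x, y) \<in> Id \<union> GG T L R" "(y, z) \<in> Id \<union> GG T L R"
  show "(x, z) \<in> Id \<union> GG T L R"
  proof (cases "x = y")
    case True then show ?thesis using a by simp
  next
    case False
    then have xy: "(x, y) \<in> GG T L R" using a by simp
    show ?thesis
    proof (cases "y = z")
      case True then show ?thesis using a by simp
    next
      case False
      then have yz: "(y, z) \<in> GG T L R" using a by simp
      have "(y, x) \<in> GG T L R" using xy by auto
      then have "x = z" using GG_partner[OF assms _ yz] by blast
      then show ?thesis by simp
    qed
  qed
qed
lemma base_map: assumes "(a, b) \<in> GG T L R" "f T = T'" "f L = L'" "f R = R'"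
  shows "((fst a, f (snd a)), (fst b, f (snd b))) \<in> GG T' L' R'"
  using assms(1) unfolding GG_iff using assms(2-4) by (elim disjE conjE) simp_all

lemma respect_glue:
  assumes "f (Mb,T) = f (Ma,L)" "f (Ma,R) = f (Mc,T)" "f (Mc,L) = f (Mb,R)"
      and "(p, q) \<in> glue_rel X T L R"
  shows "f p = f q"
  using assms(4)
proof (cases rule: glue_rel_cases)
  case 1 then show ?thesis by simp
next
  case 2
  then show ?thesis
  proof (induction rule: trancl_induct)
    case (base y) then show ?case using respect_GG[OF assms(1-3)] by blast
  next
    case (step y z) then show ?case using respect_GG[OF assms(1-3), of y z] by simp
  qed
qed

lemma GG_sub: "T \<in> X \<Longrightarrow> L \<in> X \<Longrightarrow> R \<in> X \<Longrightarrow> GG T L R \<subseteq> (UNIV \<times> X) \<times> (UNIV \<times> X)"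
  unfolding glue_gen_def by auto

lemma glue_rel_sub:
  assumes "T \<in> X" "L \<in> X" "R \<in> X"
  shows "glue_rel X T L R \<subseteq> (UNIV \<times> X) \<times> (UNIV \<times> X)"
  unfolding glue_rel_def using trancl_subset_Sigma[OF GG_sub[OF assms]] Id_on_subset_Times[of "UNIV \<times> X"]
  by (rule Un_least[rotated])

lemma glue_rel_equiv:
  assumes "T \<in> X" "L \<in> X" "R \<in> X"
  shows "equiv (UNIV \<times> X) (glue_rel X T L R)"
proof (rule equivI)
  show "refl_on (UNIV \<times> X) (glue_rel X T L R)"
    using glue_rel_sub[OF assms] unfolding refl_on_def glue_rel_def by auto
  have "sym ((GG T L R)\<^sup>+)" by (intro sym_trancl sym_Un_converse)
  then show "sym (glue_rel X T L R)"
    unfolding glue_rel_def sym_def by auto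
  show "trans (glue_rel X T L R)"
    unfolding trans_def glue_rel_def by (auto intro: trancl_trans)
  show "glue_rel X T L R \<subseteq> (UNIV \<times> X) \<times> (UNIV \<times> X)" by (rule glue_rel_sub[OF assms])
qed

lemma glue_map:
  assumes "(p, q) \<in> glue_rel X T L R" "f ` X \<subseteq> Y" "f T = T'" "f L = L'" "f R = R'"
  shows "((fst p, f (snd p)), (fst q, f (snd q))) \<in> glue_rel Y T' L' R'"
  using assms(1)
proof (cases rule: glue_rel_cases)
  case 1 then show ?thesis using assms(2) unfolding glue_rel_def by (auto simp: Id_on_def)
next
  case 2
  have bs: "((fst a, f (snd a)), (fst b, f (snd b))) \<in> GG T' L' R'" if "(a, b) \<in> GG T L R" for a b
    using base_map[OF that assms(3-5)] .
  from 2 have "((fst p, f (snd p)), (fst q, f (snd q))) \<in> (GG T' L' R')\<^sup>+"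
  proof (induction rule: trancl_induct)
    case (base y) then show ?case using bs[of p y] by blast
  next
    case (step y z) then show ?case using bs[of y z] by (meson trancl.trancl_into_trancl)
  qed
  then show ?thesis unfolding glue_rel_def by blast
qed

lemma glue_rel_char:
  assumes "T \<noteq> L" "T \<noteq> R" "L \<noteq> R" "(p, q) \<in> glue_rel X T L R"
  shows "p = q \<or> (p, q) \<in> GG T L R"
proof -
  have "(GG T L R)\<^sup>+ \<subseteq> (Id \<union> GG T L R)\<^sup>+" by (intro trancl_mono_subset) auto
  also have "\<dots> = Id \<union> GG T L R" using GG_char[OF assms(1-3)] by simp
  finally show ?thesis using assms(4) unfolding glue_rel_def by auto
qed

lemma GG_pts:
  assumes "(p, q) \<in> GG T L R"
  shows "snd p \<in> {T, L, R}" "snd q \<in> {T, L, R}"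
  using assms unfolding glue_gen_def by auto

lemma GG_sym: "(p, q) \<in> GG T L R \<Longrightarrow> (q, p) \<in> GG T L R" by auto

lemma GG_glue: "(p, q) \<in> GG T L R \<Longrightarrow> (p, q) \<in> glue_rel X T L R"
  unfolding glue_rel_def by auto

lemma GG_label: "(p, q) \<in> GG T L R \<Longrightarrow> fst p \<noteq> fst q"
  unfolding glue_gen_def by auto



lemma tens_el_carrier: "x \<in> X \<Longrightarrow> tens_el X T L R m x \<in> tens_carrier X T L R"
  unfolding tens_el_def tens_carrier_def by (rule quotientI) simp

lemma carrier_elem:
  assumes "P \<in> tens_carrier X T L R"
  obtains m x where "x \<in> X" "P = tens_el X T L R m x"
  using assms unfolding tens_carrier_def tens_el_def by (auto elim!: quotientE)

lemma mem_tens_el: "(n, y) \<in> tens_el X T L R m x \<longleftrightarrow> ((m, x), (n, y)) \<in> glue_rel X T L R"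
  unfolding tens_el_def by simp

lemma tens_el_self:
  assumes "x \<in> X" shows "(m, x) \<in> tens_el X T L R m x"
  unfolding mem_tens_el glue_rel_def using assms by (auto simp: Id_on_def)

lemma tens_el_eq:
  assumes "T \<in> X" "L \<in> X" "R \<in> X" "(n, y) \<in> tens_el X T L R m x"
  shows "tens_el X T L R n y = tens_el X T L R m x"
proof -
  have "((m, x), (n, y)) \<in> glue_rel X T L R" using assms(4) by (simp add: mem_tens_el)
  then show ?thesis unfolding tens_el_def using equiv_class_eq[OF glue_rel_equiv[OF assms(1-3)]] by metis
qed

lemma tens_el_sub:
  assumes "T \<in> X" "L \<in> X" "R \<in> X" "p \<in> tens_el X T L R m x"
  shows "snd p \<in> X"
  using assms(4) glue_rel_sub[OF assms(1-3)] unfolding tens_el_def by auto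

lemma carrier_sub:
  assumes "T \<in> X" "L \<in> X" "R \<in> X" "P \<in> tens_carrier X T L R" "p \<in> P"
  shows "snd p \<in> X"
proof -
  obtain m x where "x \<in> X" "P = tens_el X T L R m x" using assms(4) by (rule carrier_elem)
  then show ?thesis using tens_el_sub[OF assms(1-3), of p m x] assms(5) by simp
qed

lemma carrier_ne:
  assumes "P \<in> tens_carrier X T L R"
  obtains m x where "x \<in> X" "(m, x) \<in> P" "P = tens_el X T L R m x"
proof -
  obtain m x where "x \<in> X" "P = tens_el X T L R m x" using assms by (rule carrier_elem)
  then show thesis using that tens_el_self[of x X m T L R] by simp
qed

lemma tens_map_el:
  assumes X: "T \<in> X" "L \<in> X" "R \<in> X" and Y: "T' \<in> Y" "L' \<in> Y" "R' \<in> Y"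
    and f: "f ` X \<subseteq> Y" "f T = T'" "f L = L'" "f R = R'" and x: "x \<in> X"
  shows "tens_map Y T' L' R' f (tens_el X T L R m x) = tens_el Y T' L' R' m (f x)"
proof -
  let ?F = "\<lambda>(m, x). (m, f x)"
  have eqY: "equiv (UNIV \<times> Y) (glue_rel Y T' L' R')" by (rule glue_rel_equiv[OF Y])
  show ?thesis
  proof (intro set_eqI iffI)
    fix z assume "z \<in> tens_map Y T' L' R' f (tens_el X T L R m x)"
    then obtain p where p: "p \<in> tens_el X T L R m x" "(?F p, z) \<in> glue_rel Y T' L' R'"
      unfolding tens_map_def by blast
    have "((m, x), p) \<in> glue_rel X T L R" using p(1) unfolding tens_el_def by simp
    from glue_map[OF this f] have "((m, f x), ?F p) \<in> glue_rel Y T' L' R'"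
      by (cases p) simp
    moreover have "trans (glue_rel Y T' L' R')" using eqY by (simp add: equiv_def)
    ultimately have "((m, f x), z) \<in> glue_rel Y T' L' R'"
      using p(2) by (meson transD)
    then show "z \<in> tens_el Y T' L' R' m (f x)" unfolding tens_el_def by simp
  next
    fix z assume "z \<in> tens_el Y T' L' R' m (f x)"
    then have "((m, f x), z) \<in> glue_rel Y T' L' R'" unfolding tens_el_def by simp
    moreover have "(m, x) \<in> tens_el X T L R m x" by (rule tens_el_self[OF x])
    moreover have "(m, f x) = ?F (m, x)" by simp
    ultimately show "z \<in> tens_map Y T' L' R' f (tens_el X T L R m x)"
      unfolding tens_map_def by (metis ImageI imageI)
  qed
qed

section \<open>The gasket as M tensor S\<close>

abbreviation "GR \<equiv> glue_rel gasket gT gL gR"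
abbreviation "Gel \<equiv> tens_el gasket gT gL gR"
abbreviation "Gcar \<equiv> tens_carrier gasket gT gL gR"

lemma vtx_gasket': "gT \<in> gasket" "gL \<in> gasket" "gR \<in> gasket" by (rule vtx_gasket)+

lemma gtau_el:
  assumes "x \<in> gasket" shows "gtau (Gel m x) = sig m x"
  unfolding gtau_def
proof (rule the1_equality)
  have r: "sig m' y = sig m x" if "(m', y) \<in> Gel m x" for m' y
  proof -
    have "((m, x), (m', y)) \<in> GR" using that by (simp add: mem_tens_el)
    then have "(\<lambda>(m, x). sig m x) (m, x) = (\<lambda>(m, x). sig m x) (m', y)"
      by (rule respect_glue[rotated 3]) (simp_all add: sig_glue)
    then show ?thesis by simp
  qed
  show "\<exists>!y. \<exists>(m', x')\<in>Gel m x. y = sig m' x'"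
  proof (rule ex1I[of _ "sig m x"])
    show "\<exists>(m', x')\<in>Gel m x. sig m x = sig m' x'" using tens_el_self[OF assms] by blast
  next
    fix y assume "\<exists>(m', x')\<in>Gel m x. y = sig m' x'"
    then show "y = sig m x" using r by auto
  qed
  show "\<exists>(m', x')\<in>Gel m x. sig m x = sig m' x'" using tens_el_self[OF assms] by blast
qed

lemma GG_mems:
  "((Mb,T),(Ma,L)) \<in> GG T L R" "((Ma,L),(Mb,T)) \<in> GG T L R"
  "((Ma,R),(Mc,T)) \<in> GG T L R" "((Mc,T),(Ma,R)) \<in> GG T L R"
  "((Mc,L),(Mb,R)) \<in> GG T L R" "((Mb,R),(Mc,L)) \<in> GG T L R"
  unfolding glue_gen_def by blast+

lemma sig_rel:
  assumes "x \<in> gasket" "y \<in> gasket" "sig m x = sig n y"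
  shows "((m, x), (n, y)) \<in> GR"
proof -
  have xT: "x \<in> T0" and yT: "y \<in> T0" using assms gasket_T0 by auto
  have gg: "((m, x), (n, y)) \<in> GR" if "((m, x), (n, y)) \<in> GG gT gL gR"
    using that by (rule GG_glue)
  show ?thesis
  proof (cases "m = n")
    case True
    then have "x = y" using assms(3) sig_inj by blast
    then show ?thesis using True assms(1) unfolding glue_rel_def by (auto simp: Id_on_def)
  next
    case False
    show ?thesis
    proof (cases m)
      case Ma then show ?thesis
      proof (cases n)
        case Mb 
        then have "x = gL" "y = gT" using glue_ab[OF xT yT] assms(3) Ma by simp_all
        then show ?thesis using Ma Mb GG_glue[OF GG_mems(2)] by simp
      next
        case Mc
        then have "x = gR" "y = gT" using glue_ac[OF xT yT] assms(3) Ma by simp_all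
        then show ?thesis using Ma Mc GG_glue[OF GG_mems(3)] by simp
      qed (use False Ma in simp)
    next
      case Mb then show ?thesis
      proof (cases n)
        case Ma
        then have "y = gL" "x = gT" using glue_ab[OF yT xT] assms(3) Mb by simp_all
        then show ?thesis using Ma Mb GG_glue[OF GG_mems(1)] by simp
      next
        case Mc
        then have "x = gR" "y = gL" using glue_bc[OF xT yT] assms(3) Mb by simp_all
        then show ?thesis using Mb Mc GG_glue[OF GG_mems(6)] by simp
      qed (use False Mb in simp)
    next
      case Mc then show ?thesis
      proof (cases n)
        case Ma
        then have "y = gR" "x = gT" using glue_ac[OF yT xT] assms(3) Mc by simp_all
        then show ?thesis using Ma Mc GG_glue[OF GG_mems(4)] by simp
      next
        case Mb
        then have "y = gR" "x = gL" using glue_bc[OF yT xT] assms(3) Mc by simp_all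
        then show ?thesis using Mb Mc GG_glue[OF GG_mems(5)] by simp
      qed (use False Mc in simp)
    qed
  qed
qed

lemma gtau_inj: "inj_on gtau Gcar"
proof (rule inj_onI)
  fix P Q assume P: "P \<in> Gcar" and Q: "Q \<in> Gcar" and eq: "gtau P = gtau Q"
  obtain m x where x: "x \<in> gasket" "P = Gel m x" using P by (rule carrier_elem)
  obtain n y where y: "y \<in> gasket" "Q = Gel n y" using Q by (rule carrier_elem)
  have "gtau P = sig m x" unfolding x(2) by (rule gtau_el[OF x(1)])
  moreover have "gtau Q = sig n y" unfolding y(2) by (rule gtau_el[OF y(1)])
  ultimately have "sig m x = sig n y" using eq by simp
  then have "((m, x), (n, y)) \<in> GR" by (rule sig_rel[OF x(1) y(1)])
  then have "(n, y) \<in> Gel m x" by (simp add: mem_tens_el)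
  then have "Gel n y = Gel m x" by (rule tens_el_eq[OF vtx_gasket'])
  then show "P = Q" using x(2) y(2) by simp
qed

lemma gsigma_eq:
  assumes "x \<in> gasket" shows "gsigma (sig m x) = Gel m x"
  unfolding gsigma_def
  by (rule the_inv_into_f_eq[OF gtau_inj gtau_el[OF assms] tens_el_carrier[OF assms]])

lemma gasket_decomp:
  assumes "p \<in> gasket" obtains m x where "x \<in> gasket" "p = sig m x"
proof -
  have "p \<in> (\<Union>m. sig m ` gasket)" using assms by (subst (asm) gasket_inv)
  then show thesis using that by blast
qed

lemma gsigma_carrier: "p \<in> gasket \<Longrightarrow> gsigma p \<in> Gcar"
proof -
  assume "p \<in> gasket"
  then obtain m x where "x \<in> gasket" "p = sig m x" by (rule gasket_decomp)
  then show ?thesis using gsigma_eq[of x m] tens_el_carrier[of x gasket] by simp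
qed

lemma gtau_gsigma: "p \<in> gasket \<Longrightarrow> gtau (gsigma p) = p"
proof -
  assume "p \<in> gasket"
  then obtain m x where "x \<in> gasket" "p = sig m x" by (rule gasket_decomp)
  then show ?thesis using gsigma_eq[of x m] gtau_el[of x m] by simp
qed



lemma quot_chain_le:
  assumes "\<And>a b. 0 \<le> d a b" "\<forall>i\<le>n. p i \<in> S \<and> q i \<in> S" "p 0 \<in> P" "q n \<in> Q"
     "\<forall>i<n. (q i, p (Suc i)) \<in> E"
  shows "quot_dist S d E P Q \<le> (\<Sum>i\<le>n. d (p i) (q i))"
  unfolding quot_dist_def
proof (rule cInf_lower)
  show "(\<Sum>i\<le>n. d (p i) (q i)) \<in> {(\<Sum>i\<le>n. d (p i) (q i)) |p q n. (\<forall>i\<le>n. p i \<in> S \<and> q i \<in> S) \<and> p 0 \<in> P \<and> q n \<in> Q \<and> (\<forall>i<n. (q i, p (Suc i)) \<in> E)}"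
    using assms(2-5) by blast
  show "bdd_below {(\<Sum>i\<le>n. d (p i) (q i)) |p q n. (\<forall>i\<le>n. p i \<in> S \<and> q i \<in> S) \<and> p 0 \<in> P \<and> q n \<in> Q \<and> (\<forall>i<n. (q i, p (Suc i)) \<in> E)}"
    by (rule bdd_belowI[of _ 0]) (auto intro!: sum_nonneg assms(1))
qed

lemma prod_dist_nonneg: "(\<And>a b. 0 \<le> d a b) \<Longrightarrow> 0 \<le> prod_dist d p q"
  unfolding prod_dist_def by auto

lemma tens_dist_le_same:
  assumes "\<And>a b. 0 \<le> d a b" "x \<in> X" "y \<in> X"
  shows "tens_dist X d T L R (tens_el X T L R m x) (tens_el X T L R m y) \<le> d x y / 2"
proof -
  have "tens_dist X d T L R (tens_el X T L R m x) (tens_el X T L R m y)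
     \<le> (\<Sum>i\<le>(0::nat). prod_dist d ((\<lambda>_. (m, x)) i) ((\<lambda>_. (m, y)) i))"
    unfolding tens_dist_def
    by (rule quot_chain_le[where p="\<lambda>_. (m, x)" and q="\<lambda>_. (m, y)" and n=0])
       (use assms tens_el_self prod_dist_nonneg[of d, OF assms(1)] in auto)
  then show ?thesis by (simp add: prod_dist_def)
qed

lemma tripointed_gasket: "tripointed gasket dist gT gL gR"
  unfolding tripointed_def
  using Met_TC.subspace[of gasket] gasket_diam vtx_gasket dist_vtx by auto

lemma compact_piece: "compact (sig m ` gasket)"
  by (rule compact_continuous_image[OF continuous_sig compact_gasket])

lemma gsigma_cont: "metric_cont gasket dist Gcar (tens_dist gasket dist gT gL gR) gsigma"
  unfolding metric_cont_def
proof (intro conjI ballI allI impI)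
  show "gsigma ` gasket \<subseteq> Gcar" using gsigma_carrier by blast
next
  fix p e assume p: "p \<in> gasket" and e: "(0::real) < e"
  define dm where "dm m = (if p \<in> sig m ` gasket then e else infdist p (sig m ` gasket))" for m
  have dmpos: "dm m > 0" for m
  proof (cases "p \<in> sig m ` gasket")
    case True then show ?thesis using e by (simp add: dm_def)
  next
    case False
    have "sig m ` gasket \<noteq> {}" using vtx_gasket by blast
    then show ?thesis using False infdist_pos_not_in_closed[OF compact_imp_closed[OF compact_piece]]
      by (simp add: dm_def)
  qed
  define \<delta> where "\<delta> = min (dm Ma) (min (dm Mb) (dm Mc))"
  have dle: "\<delta> \<le> dm m" for m unfolding \<delta>_def by (cases m) auto
  have "\<delta> > 0" unfolding \<delta>_def using dmpos by simp
  moreover have "tens_dist gasket dist gT gL gR (gsigma p) (gsigma q) < e"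
    if q: "q \<in> gasket" "dist p q < \<delta>" for q
  proof -
    obtain m z where z: "z \<in> gasket" "q = sig m z" using q(1) by (rule gasket_decomp)
    have pin: "p \<in> sig m ` gasket"
    proof (rule ccontr)
      assume "p \<notin> sig m ` gasket"
      then have "dm m = infdist p (sig m ` gasket)" by (simp add: dm_def)
      also have "\<dots> \<le> dist p q" using z by (intro infdist_le) blast
      finally show False using q(2) dle[of m] by simp
    qed
    then obtain w where w: "w \<in> gasket" "p = sig m w" by blast
    have "tens_dist gasket dist gT gL gR (gsigma p) (gsigma q) \<le> dist w z / 2"
      using w z gsigma_eq tens_dist_le_same[of dist w gasket z] by simp
    also have "\<dots> = dist p q" using w z by (simp add: dist_sig)
    also have "\<dots> < dm m" using q(2) dle[of m] by simp
    also have "dm m = e" using pin by (simp add: dm_def)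
    finally show ?thesis .
  qed
  ultimately show "\<exists>\<delta>>0. \<forall>y\<in>gasket. dist p y < \<delta> \<longrightarrow> tens_dist gasket dist gT gL gR (gsigma p) (gsigma y) < e"
    by blast
qed

lemma coalg_gasket: "coalg gasket dist gT gL gR gsigma"
  unfolding coalg_def met3_mor_def
  using tripointed_gasket gsigma_cont gsigma_eq[OF vtx_gasket(1), of Ma] gsigma_eq[OF vtx_gasket(2), of Mb]
    gsigma_eq[OF vtx_gasket(3), of Mc] by (simp add: sig_fix)



definition pres :: "'a \<Rightarrow> 'a \<Rightarrow> 'a \<Rightarrow> ('a \<Rightarrow> real \<times> real) \<Rightarrow> bool" where
  "pres T L R g \<longleftrightarrow> g T = gT \<and> g L = gL \<and> g R = gR"

definition gcont :: "'a set \<Rightarrow> ('a \<Rightarrow> 'a \<Rightarrow> real) \<Rightarrow> ('a \<Rightarrow> real \<times> real) \<Rightarrow> bool" where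
  "gcont X d g \<longleftrightarrow> (\<forall>x\<in>X. \<forall>\<epsilon>>0. \<exists>\<delta>>0. \<forall>y\<in>X. d x y < \<delta> \<longrightarrow> dist (g x) (g y) < \<epsilon>)"

locale coal =
  fixes X :: "'a set" and d :: "'a \<Rightarrow> 'a \<Rightarrow> real" and T L R :: 'a and e :: "'a \<Rightarrow> (mlab \<times> 'a) set"
  assumes co: "coalg X d T L R e"
begin

lemma MS: "Metric_space X d" and TLR: "T \<in> X" "L \<in> X" "R \<in> X"
  and dTLR: "d T L = 1" "d T R = 1" "d L R = 1"
  and dle1: "\<And>x y. x \<in> X \<Longrightarrow> y \<in> X \<Longrightarrow> d x y \<le> 1"
  using co unfolding coalg_def tripointed_def by auto

lemma d_nonneg: "0 \<le> d x y" using MS by (rule Metric_space.nonneg)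
lemma d_comm: "d x y = d y x" using MS by (rule Metric_space.commute)
lemma d_self: "x \<in> X \<Longrightarrow> d x x = 0" using Metric_space.zero[OF MS] by blast
lemma d_tri: "x \<in> X \<Longrightarrow> y \<in> X \<Longrightarrow> z \<in> X \<Longrightarrow> d x z \<le> d x y + d y z"
  using MS by (rule Metric_space.triangle)

lemma distinct_TLR: "T \<noteq> L" "T \<noteq> R" "L \<noteq> R"
  using dTLR d_self TLR by auto

lemma e_car: "x \<in> X \<Longrightarrow> e x \<in> tens_carrier X T L R"
  using co unfolding coalg_def met3_mor_def metric_cont_def by blast

lemma e_cont: "x \<in> X \<Longrightarrow> \<epsilon> > 0 \<Longrightarrow> \<exists>\<delta>>0. \<forall>y\<in>X. d x y < \<delta> \<longrightarrow> tens_dist X d T L R (e x) (e y) < \<epsilon>"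
  using co unfolding coalg_def met3_mor_def metric_cont_def by blast

lemma e_pts: "e T = tens_el X T L R Ma T" "e L = tens_el X T L R Mb L" "e R = tens_el X T L R Mc R"
  using co unfolding coalg_def met3_mor_def by auto

lemma rep:
  assumes "x \<in> X" obtains m x' where "x' \<in> X" "(m, x') \<in> e x" "e x = tens_el X T L R m x'"
  using carrier_ne[OF e_car[OF assms]] by blast

lemma rep_X: "x \<in> X \<Longrightarrow> p \<in> e x \<Longrightarrow> snd p \<in> X"
  using carrier_sub[OF TLR e_car] by blast

definition Phi :: "('a \<Rightarrow> real \<times> real) \<Rightarrow> 'a \<Rightarrow> real \<times> real" where
  "Phi g x = (THE y. \<exists>(m, x')\<in>e x. y = sig m (g x'))"

lemma sig_resp:
  assumes "pres T L R g" "(p, q) \<in> glue_rel X T L R"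
  shows "sig (fst p) (g (snd p)) = sig (fst q) (g (snd q))"
proof -
  have "(\<lambda>(m, x). sig m (g x)) p = (\<lambda>(m, x). sig m (g x)) q"
    by (rule respect_glue[OF _ _ _ assms(2)]) (use assms(1) in \<open>simp_all add: pres_def sig_glue\<close>)
  then show ?thesis by (cases p; cases q) simp
qed

lemma Phi_eq:
  assumes "pres T L R g" "x \<in> X" "(m, x') \<in> e x"
  shows "Phi g x = sig m (g x')"
proof -
  obtain m0 x0 where r: "x0 \<in> X" "(m0, x0) \<in> e x" "e x = tens_el X T L R m0 x0" using rep[OF assms(2)] .
  have all: "sig n (g y) = sig m0 (g x0)" if "(n, y) \<in> e x" for n y
  proof -
    have "((m0, x0), (n, y)) \<in> glue_rel X T L R" using that r(3) by (simp add: mem_tens_el)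
    from sig_resp[OF assms(1) this] show ?thesis by simp
  qed
  have "Phi g x = sig m0 (g x0)"
    unfolding Phi_def
  proof (rule the_equality)
    show "\<exists>(m, x')\<in>e x. sig m0 (g x0) = sig m (g x')" using r(2) by blast
  next
    fix y assume "\<exists>(m, x')\<in>e x. y = sig m (g x')"
    then show "y = sig m0 (g x0)" using all by auto
  qed
  then show ?thesis using all[OF assms(3)] by simp
qed

lemma Phi_pres: "pres T L R g \<Longrightarrow> pres T L R (Phi g)"
proof -
  assume g: "pres T L R g"
  have "Phi g T = sig Ma (g T)" by (rule Phi_eq[OF g TLR(1)]) (simp add: e_pts tens_el_self TLR)
  moreover have "Phi g L = sig Mb (g L)" by (rule Phi_eq[OF g TLR(2)]) (simp add: e_pts tens_el_self TLR)
  moreover have "Phi g R = sig Mc (g R)" by (rule Phi_eq[OF g TLR(3)]) (simp add: e_pts tens_el_self TLR)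
  ultimately show ?thesis using g by (simp add: pres_def sig_fix)
qed

lemma Phi_contr:
  assumes "pres T L R g1" "pres T L R g2" "\<And>x. x \<in> X \<Longrightarrow> dist (g1 x) (g2 x) \<le> c" "x \<in> X"
  shows "dist (Phi g1 x) (Phi g2 x) \<le> c / 2"
proof -
  obtain m x' where r: "x' \<in> X" "(m, x') \<in> e x" using rep[OF assms(4)] by blast
  have "dist (Phi g1 x) (Phi g2 x) = dist (sig m (g1 x')) (sig m (g2 x'))"
    using Phi_eq[OF assms(1) assms(4) r(2)] Phi_eq[OF assms(2) assms(4) r(2)] by simp
  also have "\<dots> = dist (g1 x') (g2 x') / 2" by (rule dist_sig)
  also have "\<dots> \<le> c / 2" using assms(3)[OF r(1)] by simp
  finally show ?thesis .
qed

lemma Phi_Tn: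
  assumes "pres T L R g" "\<And>x. x \<in> X \<Longrightarrow> g x \<in> Tn n" "x \<in> X"
  shows "Phi g x \<in> Tn (Suc n)"
proof -
  obtain m x' where r: "x' \<in> X" "(m, x') \<in> e x" using rep[OF assms(3)] by blast
  have "Phi g x = sig m (g x')" by (rule Phi_eq[OF assms(1,3) r(2)])
  then show ?thesis using sig_Tn[OF assms(2)[OF r(1)]] by simp
qed

lemma Phi_cong:
  assumes "pres T L R g1" "pres T L R g2" "\<And>x. x \<in> X \<Longrightarrow> g1 x = g2 x" "x \<in> X"
  shows "Phi g1 x = Phi g2 x"
  using Phi_contr[OF assms(1,2), of 0 x] assms(3,4) by simp

end



context coal begin

definition Inv :: "mlab \<Rightarrow> 'a \<Rightarrow> mlab \<times> 'a \<Rightarrow> real \<Rightarrow> bool" where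
  "Inv m x0 r c \<longleftrightarrow> snd r \<in> X \<and> ((fst r = m \<and> d x0 (snd r) \<le> 2 * c) \<or>
     (\<exists>v m' v'. ((m, v), (m', v')) \<in> GG T L R \<and> fst r = m' \<and> d x0 v + d v' (snd r) \<le> 2 * c))"

lemma GG_X: "(p, q) \<in> GG T L R \<Longrightarrow> snd p \<in> X \<and> snd q \<in> X"
  using GG_pts[of p q T L R] TLR by auto

lemma TLR_close: "a \<in> {T, L, R} \<Longrightarrow> b \<in> {T, L, R} \<Longrightarrow> d a b < 1 \<Longrightarrow> a = b"
  using dTLR d_comm[of L T] d_comm[of R T] d_comm[of R L] by auto

lemma step_glue:
  assumes x0: "x0 \<in> X" and I: "Inv m x0 r c" and c: "c < 1/2" and rp: "(r, p) \<in> glue_rel X T L R"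
  shows "Inv m x0 p c"
proof -
  have "r = p \<or> (r, p) \<in> GG T L R" by (rule glue_rel_char[OF distinct_TLR rp])
  then show ?thesis
  proof
    assume "r = p" then show ?thesis using I by simp
  next
    assume g: "(r, p) \<in> GG T L R"
    have pX: "snd p \<in> X" using GG_X[OF g] by simp
    from I have rX: "snd r \<in> X" and
      br: "(fst r = m \<and> d x0 (snd r) \<le> 2 * c) \<or>
        (\<exists>v m' v'. ((m, v), (m', v')) \<in> GG T L R \<and> fst r = m' \<and> d x0 v + d v' (snd r) \<le> 2 * c)"
      unfolding Inv_def by auto
    from br show ?thesis
    proof
      assume A: "fst r = m \<and> d x0 (snd r) \<le> 2 * c"
      have "((m, snd r), (fst p, snd p)) \<in> GG T L R" using g A by (cases r; cases p) auto
      moreover have "d x0 (snd r) + d (snd p) (snd p) \<le> 2 * c" using A d_self[OF pX] by simp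
      ultimately show ?thesis unfolding Inv_def using pX by blast
    next
      assume "\<exists>v m' v'. ((m, v), (m', v')) \<in> GG T L R \<and> fst r = m' \<and> d x0 v + d v' (snd r) \<le> 2 * c"
      then obtain v m' v' where B: "((m, v), (m', v')) \<in> GG T L R" "fst r = m'" "d x0 v + d v' (snd r) \<le> 2 * c"
        by blast
      have "v' \<in> {T, L, R}" using GG_pts(2)[OF B(1)] by simp
      moreover have "snd r \<in> {T, L, R}" using GG_pts(1)[OF g] .
      moreover have "d v' (snd r) < 1" using B(3) c d_nonneg[of x0 v] by linarith
      ultimately have "v' = snd r" by (rule TLR_close)
      then have r: "r = (m', v')" using B(2) by (cases r) simp
      have "((m', v'), (m, v)) \<in> GG T L R" using B(1) by (rule GG_sym)
      then have "p = (m, v)" using GG_partner[OF distinct_TLR, of r p "(m, v)"] g r by simp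
      moreover have "d x0 v \<le> 2 * c" using B(3) d_nonneg[of v' "snd r"] by linarith
      ultimately show ?thesis unfolding Inv_def using pX by simp
    qed
  qed
qed

lemma step_move:
  assumes x0: "x0 \<in> X" and I: "Inv m x0 p c" and qX: "snd q \<in> X" and f: "fst q = fst p"
  shows "Inv m x0 q (c + d (snd p) (snd q) / 2)"
proof -
  from I have pX: "snd p \<in> X" and
    br: "(fst p = m \<and> d x0 (snd p) \<le> 2 * c) \<or>
      (\<exists>v m' v'. ((m, v), (m', v')) \<in> GG T L R \<and> fst p = m' \<and> d x0 v + d v' (snd p) \<le> 2 * c)"
    unfolding Inv_def by auto
  from br show ?thesis
  proof
    assume A: "fst p = m \<and> d x0 (snd p) \<le> 2 * c"
    have "d x0 (snd q) \<le> d x0 (snd p) + d (snd p) (snd q)" by (rule d_tri[OF x0 pX qX])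
    then show ?thesis using A f qX unfolding Inv_def by simp
  next
    assume "\<exists>v m' v'. ((m, v), (m', v')) \<in> GG T L R \<and> fst p = m' \<and> d x0 v + d v' (snd p) \<le> 2 * c"
    then obtain v m' v' where B: "((m, v), (m', v')) \<in> GG T L R" "fst p = m'" "d x0 v + d v' (snd p) \<le> 2 * c"
      by blast
    have v'X: "v' \<in> X" using GG_X[OF B(1)] by simp
    have "d v' (snd q) \<le> d v' (snd p) + d (snd p) (snd q)" by (rule d_tri[OF v'X pX qX])
    then have "d x0 v + d v' (snd q) \<le> 2 * (c + d (snd p) (snd q) / 2)" using B(3) by simp
    then show ?thesis unfolding Inv_def using B(1,2) f qX by blast
  qed
qed

lemma pd_small:
  assumes "prod_dist d p q < 1"
  shows "fst p = fst q" "prod_dist d p q = d (snd p) (snd q) / 2"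
  using assms unfolding prod_dist_def by (auto split: if_splits)

lemma chain_Inv:
  assumes x0: "x0 \<in> X"
    and ch: "\<forall>i\<le>n. p i \<in> UNIV \<times> X \<and> q i \<in> UNIV \<times> X" "p 0 \<in> tens_el X T L R m x0"
      "\<forall>i<n. (q i, p (Suc i)) \<in> glue_rel X T L R"
    and small: "(\<Sum>i\<le>n. prod_dist d (p i) (q i)) < 1/2"
  shows "Inv m x0 (q n) (\<Sum>i\<le>n. prod_dist d (p i) (q i))"
proof -
  define S where "S k = (\<Sum>i\<le>k. prod_dist d (p i) (q i))" for k
  have pdnn: "0 \<le> prod_dist d a b" for a b by (rule prod_dist_nonneg[OF d_nonneg])
  have Sle: "S k \<le> S n" if "k \<le> n" for k
    unfolding S_def by (rule sum_mono2) (use that pdnn in auto)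
  have pdle: "prod_dist d (p k) (q k) \<le> S n" if "k \<le> n" for k
    unfolding S_def by (rule member_le_sum) (use that pdnn in auto)
  have Sn: "S n < 1/2" using small by (simp add: S_def)
  have "Inv m x0 (q k) (S k)" if "k \<le> n" for k
    using that
  proof (induction k)
    case 0
    have I0: "Inv m x0 (m, x0) 0" unfolding Inv_def using x0 d_self[OF x0] by simp
    have "((m, x0), p 0) \<in> glue_rel X T L R" using ch(2) unfolding tens_el_def by simp
    then have "Inv m x0 (p 0) 0" by (rule step_glue[OF x0 I0, rotated]) simp
    moreover have pd: "prod_dist d (p 0) (q 0) < 1" using pdle[of 0] Sn by simp
    ultimately have "Inv m x0 (q 0) (0 + d (snd (p 0)) (snd (q 0)) / 2)"
      using step_move[OF x0] ch(1) pd_small(1)[OF pd] by (metis mem_Times_iff zero_le)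
    moreover have "S 0 = 0 + d (snd (p 0)) (snd (q 0)) / 2" using pd_small(2)[OF pd] by (simp add: S_def)
    ultimately show ?case by (simp only:)
  next
    case (Suc k)
    then have IH: "Inv m x0 (q k) (S k)" by simp
    have "S k < 1/2" using Sle[of k] Suc.prems Sn by simp
    then have "Inv m x0 (p (Suc k)) (S k)"
      using step_glue[OF x0 IH] ch(3) Suc.prems by simp
    moreover have pd: "prod_dist d (p (Suc k)) (q (Suc k)) < 1" using pdle[OF Suc.prems] Sn by simp
    ultimately have "Inv m x0 (q (Suc k)) (S k + d (snd (p (Suc k))) (snd (q (Suc k))) / 2)"
      using step_move[OF x0] ch(1) pd_small(1)[OF pd] Suc.prems by (metis mem_Times_iff)
    moreover have "S (Suc k) = S k + d (snd (p (Suc k))) (snd (q (Suc k))) / 2"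
      using pd_small(2)[OF pd] by (simp add: S_def)
    ultimately show ?case by (simp only:)
  qed
  then show ?thesis by (simp add: S_def)
qed

end



context coal begin

lemma tens_dist_chain:
  assumes "tens_dist X d T L R P Q < r" "P \<in> tens_carrier X T L R" "Q \<in> tens_carrier X T L R"
  obtains p q n where "\<forall>i\<le>n. p i \<in> UNIV \<times> X \<and> q i \<in> UNIV \<times> X" "p 0 \<in> P" "q n \<in> Q"
    "\<forall>i<n. (q i, p (Suc i)) \<in> glue_rel X T L R" "(\<Sum>i\<le>n. prod_dist d (p i) (q i)) < r"
proof -
  let ?S = "{(\<Sum>i\<le>n. prod_dist d (p i) (q i)) |p q n. (\<forall>i\<le>n. p i \<in> UNIV \<times> X \<and> q i \<in> UNIV \<times> X) \<and>
       p 0 \<in> P \<and> q n \<in> Q \<and> (\<forall>i<n. (q i, p (Suc i)) \<in> glue_rel X T L R)}"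
  obtain m1 x1 where 1: "x1 \<in> X" "(m1, x1) \<in> P" using carrier_ne[OF assms(2)] by metis
  obtain m2 x2 where 2: "x2 \<in> X" "(m2, x2) \<in> Q" using carrier_ne[OF assms(3)] by metis
  have "(\<Sum>i\<le>(0::nat). prod_dist d ((\<lambda>_. (m1, x1)) i) ((\<lambda>_. (m2, x2)) i)) \<in> ?S"
    using 1 2 by (intro CollectI exI[of _ "\<lambda>_. (m1, x1)"] exI[of _ "\<lambda>_. (m2, x2)"] exI[of _ "0::nat"]) auto
  then have ne: "?S \<noteq> {}" by blast
  have "Inf ?S < r" using assms(1) unfolding tens_dist_def quot_dist_def .
  then obtain s where "s \<in> ?S" "s < r" using cInf_lessD[OF ne] by blast
  then show thesis using that by blast
qed

lemma Phi_cont: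
  assumes g: "pres T L R g" and gc: "gcont X d g"
  shows "gcont X d (Phi g)"
  unfolding gcont_def
proof (intro ballI allI impI)
  fix x and \<epsilon> :: real assume x: "x \<in> X" and \<epsilon>: "\<epsilon> > 0"
  obtain m x0 where r: "x0 \<in> X" "(m, x0) \<in> e x" "e x = tens_el X T L R m x0" using rep[OF x] .
  have e2: "\<epsilon> / 2 > 0" using \<epsilon> by simp
  obtain \<delta>0 where d0: "\<delta>0 > 0" "\<And>z. z \<in> X \<Longrightarrow> d x0 z < \<delta>0 \<Longrightarrow> dist (g x0) (g z) < \<epsilon>/2"
    using gc r(1) e2 unfolding gcont_def by meson
  obtain \<delta>T where dT: "\<delta>T > 0" "\<And>z. z \<in> X \<Longrightarrow> d T z < \<delta>T \<Longrightarrow> dist (g T) (g z) < \<epsilon>/2"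
    using gc TLR(1) e2 unfolding gcont_def by meson
  obtain \<delta>L where dL: "\<delta>L > 0" "\<And>z. z \<in> X \<Longrightarrow> d L z < \<delta>L \<Longrightarrow> dist (g L) (g z) < \<epsilon>/2"
    using gc TLR(2) e2 unfolding gcont_def by meson
  obtain \<delta>R where dR: "\<delta>R > 0" "\<And>z. z \<in> X \<Longrightarrow> d R z < \<delta>R \<Longrightarrow> dist (g R) (g z) < \<epsilon>/2"
    using gc TLR(3) e2 unfolding gcont_def by meson
  define \<delta>1 where "\<delta>1 = min (1/4) (min (\<delta>0/2) (min (\<delta>T/2) (min (\<delta>L/2) (\<delta>R/2))))"
  have \<delta>1: "\<delta>1 > 0" unfolding \<delta>1_def using d0 dT dL dR by simp
  have dv: "dist (g w) (g z) < \<epsilon>/2" if "w \<in> {T, L, R}" "z \<in> X" "d w z < 2 * \<delta>1" for w z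
  proof -
    have "w = T \<or> w = L \<or> w = R" using that(1) by simp
    then show ?thesis
    proof (elim disjE)
      assume "w = T" then show ?thesis using dT(2)[OF that(2)] that(3) unfolding \<delta>1_def by simp
    next
      assume "w = L" then show ?thesis using dL(2)[OF that(2)] that(3) unfolding \<delta>1_def by simp
    next
      assume "w = R" then show ?thesis using dR(2)[OF that(2)] that(3) unfolding \<delta>1_def by simp
    qed
  qed
  obtain \<delta> where \<delta>: "\<delta> > 0" "\<forall>y\<in>X. d x y < \<delta> \<longrightarrow> tens_dist X d T L R (e x) (e y) < \<delta>1"
    using e_cont[OF x \<delta>1] by blast
  have "dist (Phi g x) (Phi g y) < \<epsilon>" if y: "y \<in> X" "d x y < \<delta>" for y
  proof -
    have "tens_dist X d T L R (e x) (e y) < \<delta>1" using \<delta>(2) y by blast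
    then obtain p q n where ch: "\<forall>i\<le>n. p i \<in> UNIV \<times> X \<and> q i \<in> UNIV \<times> X" "p 0 \<in> e x" "q n \<in> e y"
      "\<forall>i<n. (q i, p (Suc i)) \<in> glue_rel X T L R" "(\<Sum>i\<le>n. prod_dist d (p i) (q i)) < \<delta>1"
      by (rule tens_dist_chain[OF _ e_car[OF x] e_car[OF y(1)]])
    define C where "C = (\<Sum>i\<le>n. prod_dist d (p i) (q i))"
    have C: "C < \<delta>1" using ch(5) by (simp add: C_def)
    have "C < 1/2" using C unfolding \<delta>1_def by simp
    then have I: "Inv m x0 (q n) C"
      unfolding C_def by (intro chain_Inv[OF r(1) ch(1) _ ch(4)]) (use ch(2) r(3) in simp_all)
    define z where "z = snd (q n)"
    define mz where "mz = fst (q n)"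
    have qn: "q n = (mz, z)" by (simp add: z_def mz_def)
    have zX: "z \<in> X" using I unfolding Inv_def z_def by simp
    have Px: "Phi g x = sig m (g x0)" by (rule Phi_eq[OF g x r(2)])
    have Py: "Phi g y = sig mz (g z)" by (rule Phi_eq[OF g y(1)]) (use ch(3) qn in simp)
    from I have br: "(mz = m \<and> d x0 z \<le> 2 * C) \<or>
       (\<exists>v m' v'. ((m, v), (m', v')) \<in> GG T L R \<and> mz = m' \<and> d x0 v + d v' z \<le> 2 * C)"
      unfolding Inv_def z_def mz_def by simp
    then show ?thesis
    proof
      assume A: "mz = m \<and> d x0 z \<le> 2 * C"
      then have "d x0 z < \<delta>0" using C unfolding \<delta>1_def by simp
      then have "dist (g x0) (g z) < \<epsilon>/2" by (rule d0(2)[OF zX])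
      moreover have "dist (Phi g x) (Phi g y) = dist (g x0) (g z) / 2" using A Px Py by (simp add: dist_sig)
      ultimately show ?thesis using \<epsilon> zero_le_dist[of "g x0" "g z"] by linarith
    next
      assume "\<exists>v m' v'. ((m, v), (m', v')) \<in> GG T L R \<and> mz = m' \<and> d x0 v + d v' z \<le> 2 * C"
      then obtain v m' v' where B: "((m, v), (m', v')) \<in> GG T L R" "mz = m'" "d x0 v + d v' z \<le> 2 * C"
        by blast
      have vX: "v \<in> X" and v'X: "v' \<in> X" using GG_X[OF B(1)] by auto
      have v'3: "v' \<in> {T, L, R}" using GG_pts(2)[OF B(1)] by simp
      have "d x0 v < \<delta>0" using B(3) C d_nonneg[of v' z] unfolding \<delta>1_def by simp
      then have 1: "dist (g x0) (g v) < \<epsilon>/2" by (rule d0(2)[OF vX])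
      have "d v' z < 2 * \<delta>1" using B(3) C d_nonneg[of x0 v] by simp
      then have 2: "dist (g v') (g z) < \<epsilon>/2" by (rule dv[OF v'3 zX])
      have eqv: "sig m (g v) = sig m' (g v')"
        using sig_resp[OF g GG_glue[OF B(1)]] by simp
      have "dist (Phi g x) (Phi g y) \<le> dist (sig m (g x0)) (sig m (g v)) + dist (sig m (g v)) (sig mz (g z))"
        unfolding Px Py by (rule dist_triangle)
      also have "\<dots> = dist (g x0) (g v) / 2 + dist (g v') (g z) / 2"
      proof -
        have a: "dist (sig m (g x0)) (sig m (g v)) = dist (g x0) (g v) / 2" by (rule dist_sig)
        have b: "dist (sig m (g v)) (sig mz (g z)) = dist (g v') (g z) / 2"
          unfolding eqv B(2) by (rule dist_sig)
        show ?thesis unfolding a b ..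
      qed
      also have "\<dots> < \<epsilon>" using 1 2 \<epsilon> zero_le_dist[of "g x0" "g v"] zero_le_dist[of "g v'" "g z"] by linarith
      finally show ?thesis .
    qed
  qed
  then show "\<exists>\<delta>>0. \<forall>y\<in>X. d x y < \<delta> \<longrightarrow> dist (Phi g x) (Phi g y) < \<epsilon>" using \<delta>(1) by blast
qed

end



lemma min1_lip: "\<bar>min (a::real) 1 - min b 1\<bar> \<le> \<bar>a - b\<bar>" by (simp add: min_def abs_if)
lemma max0_lip: "\<bar>max ((a::real) - 1) 0 - max (b - 1) 0\<bar> \<le> \<bar>a - b\<bar>" by (simp add: max_def abs_if)

lemma half_pow_small: assumes "\<And>n. (a::real) \<le> (1/2)^n" shows "a \<le> 0"
proof (rule ccontr)
  assume "\<not> a \<le> 0"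
  then obtain n where "(1/2::real)^n < a" using real_arch_pow_inv[of a "1/2"] by auto
  then show False using assms[of n] by simp
qed

context coal begin

definition tt :: "'a \<Rightarrow> real" where "tt x = 1 + d x T - d x R"
definition h0 :: "'a \<Rightarrow> real \<times> real" where
  "h0 x = gT + min (tt x) 1 *\<^sub>R (gL - gT) + max (tt x - 1) 0 *\<^sub>R (gR - gL)"

lemma h0_pres: "pres T L R h0"
proof -
  have "tt T = 0" "tt L = 1" "tt R = 2"
    using dTLR d_self TLR d_comm[of L T] d_comm[of R T] by (auto simp: tt_def)
  then show ?thesis unfolding pres_def h0_def by simp
qed

lemma h0_T0: assumes x: "x \<in> X" shows "h0 x \<in> T0"
proof -
  have "0 \<le> tt x" "tt x \<le> 2" using dle1[OF x TLR(1)] dle1[OF x TLR(3)] d_nonneg[of x T] d_nonneg[of x R]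
    by (auto simp: tt_def)
  show ?thesis
  proof (cases "tt x \<le> 1")
    case True
    then have "h0 x = (1 - tt x) *\<^sub>R gT + tt x *\<^sub>R gL" by (simp add: h0_def algebra_simps)
    also have "\<dots> \<in> T0" by (rule convexD[OF convex_T0 vtx_T0(1) vtx_T0(2)]) (use True \<open>0 \<le> tt x\<close> in auto)
    finally show ?thesis .
  next
    case False
    then have "h0 x = (2 - tt x) *\<^sub>R gL + (tt x - 1) *\<^sub>R gR" by (simp add: h0_def algebra_simps scaleR_2)
    also have "\<dots> \<in> T0" by (rule convexD[OF convex_T0 vtx_T0(2) vtx_T0(3)]) (use False \<open>tt x \<le> 2\<close> in auto)
    finally show ?thesis .
  qed
qed

lemma h0_lip: assumes x: "x \<in> X" and y: "y \<in> X" shows "dist (h0 x) (h0 y) \<le> 4 * d x y"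
proof -
  have tri: "\<bar>d x w - d y w\<bar> \<le> d x y" if w: "w \<in> X" for w
    using d_tri[OF x y w] d_tri[OF y x w] d_comm[of y x] by linarith
  have t: "\<bar>tt x - tt y\<bar> \<le> 2 * d x y" using tri[OF TLR(1)] tri[OF TLR(3)] by (simp add: tt_def)
  have n1: "norm (gL - gT) = 1" using dist_vtx(1) by (simp add: dist_norm norm_minus_commute)
  have n2: "norm (gR - gL) = 1" using dist_vtx(3) by (simp add: dist_norm norm_minus_commute)
  have "h0 x - h0 y = (min (tt x) 1 - min (tt y) 1) *\<^sub>R (gL - gT) + (max (tt x - 1) 0 - max (tt y - 1) 0) *\<^sub>R (gR - gL)"
    by (simp add: h0_def algebra_simps)
  then have "dist (h0 x) (h0 y) \<le> norm ((min (tt x) 1 - min (tt y) 1) *\<^sub>R (gL - gT)) + norm ((max (tt x - 1) 0 - max (tt y - 1) 0) *\<^sub>R (gR - gL))"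
    by (simp only: dist_norm norm_triangle_ineq)
  also have "\<dots> = \<bar>min (tt x) 1 - min (tt y) 1\<bar> + \<bar>max (tt x - 1) 0 - max (tt y - 1) 0\<bar>"
    using n1 n2 by simp
  also have "\<dots> \<le> 4 * d x y" using min1_lip[of "tt x" "tt y"] max0_lip[of "tt x" "tt y"] t by linarith
  finally show ?thesis .
qed

lemma h0_cont: "gcont X d h0"
  unfolding gcont_def
proof (intro ballI allI impI)
  fix x and \<epsilon> :: real assume x: "x \<in> X" and \<epsilon>: "\<epsilon> > 0"
  have "dist (h0 x) (h0 y) < \<epsilon>" if "y \<in> X" "d x y < \<epsilon> / 4" for y
    using h0_lip[OF x that(1)] that(2) by linarith
  then show "\<exists>\<delta>>0. \<forall>y\<in>X. d x y < \<delta> \<longrightarrow> dist (h0 x) (h0 y) < \<epsilon>" using \<epsilon> by (intro exI[of _ "\<epsilon>/4"]) auto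
qed

definition hs :: "nat \<Rightarrow> 'a \<Rightarrow> real \<times> real" where "hs n = (Phi ^^ n) h0"

lemma iter_pres: "pres T L R g \<Longrightarrow> pres T L R ((Phi ^^ n) g)"
  by (induction n) (simp_all add: Phi_pres)

lemma hs_pres: "pres T L R (hs n)" unfolding hs_def by (rule iter_pres[OF h0_pres])

lemma hs_cont: "gcont X d (hs n)"
  unfolding hs_def by (induction n) (simp_all add: h0_cont Phi_cont iter_pres[OF h0_pres])

lemma hs_Tn: "x \<in> X \<Longrightarrow> hs n x \<in> Tn n"
proof (induction n arbitrary: x)
  case 0 then show ?case by (simp add: hs_def h0_T0)
next
  case (Suc n)
  have "Phi (hs n) x \<in> Tn (Suc n)" by (rule Phi_Tn[OF hs_pres Suc.IH Suc.prems])
  then show ?case by (simp add: hs_def)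
qed

lemma iter_contr:
  assumes "pres T L R g1" "pres T L R g2" "\<And>x. x \<in> X \<Longrightarrow> dist (g1 x) (g2 x) \<le> c"
  shows "x \<in> X \<Longrightarrow> dist ((Phi ^^ n) g1 x) ((Phi ^^ n) g2 x) \<le> c / 2 ^ n"
proof (induction n arbitrary: x)
  case 0 then show ?case using assms(3) by simp
next
  case (Suc n)
  have "dist (Phi ((Phi ^^ n) g1) x) (Phi ((Phi ^^ n) g2) x) \<le> (c / 2 ^ n) / 2"
    by (rule Phi_contr[OF iter_pres[OF assms(1)] iter_pres[OF assms(2)] Suc.IH Suc.prems])
  then show ?case by simp
qed

lemma hs_cauchy: assumes x: "x \<in> X" shows "dist (hs (n + k) x) (hs n x) \<le> (1/2) ^ n"
proof -
  have e1: "hs (n + k) = (Phi ^^ n) (hs k)" by (simp add: hs_def funpow_add)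
  have e2: "hs n = (Phi ^^ n) h0" by (simp add: hs_def)
  have bnd: "dist (hs k y) (h0 y) \<le> 1" if "y \<in> X" for y
    using T0_diam[OF subsetD[OF Tn_T0 hs_Tn[OF that]] h0_T0[OF that]] .
  have "dist ((Phi ^^ n) (hs k) x) ((Phi ^^ n) h0 x) \<le> 1 / 2 ^ n"
    by (rule iter_contr[OF hs_pres h0_pres bnd x])
  then show ?thesis unfolding e1 e2 by (simp add: power_one_over)
qed

lemma hs_Cauchy: assumes x: "x \<in> X" shows "Cauchy (\<lambda>n. hs n x)"
proof (rule metric_CauchyI)
  fix \<epsilon> :: real assume \<epsilon>: "\<epsilon> > 0"
  obtain N where N: "(1/2::real) ^ N < \<epsilon> / 2" using real_arch_pow_inv[of "\<epsilon>/2" "1/2"] \<epsilon> by auto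
  have "dist (hs m x) (hs n x) < \<epsilon>" if "m \<ge> N" "n \<ge> N" for m n
  proof -
    have "dist (hs m x) (hs N x) \<le> (1/2)^N" using hs_cauchy[OF x, of N "m - N"] that by simp
    moreover have "dist (hs n x) (hs N x) \<le> (1/2)^N" using hs_cauchy[OF x, of N "n - N"] that by simp
    ultimately show ?thesis using dist_triangle[of "hs m x" "hs n x" "hs N x"] N dist_commute[of "hs n x" "hs N x"]
      by linarith
  qed
  then show "\<exists>M. \<forall>m\<ge>M. \<forall>n\<ge>M. dist (hs m x) (hs n x) < \<epsilon>" by blast
qed

definition hlim :: "'a \<Rightarrow> real \<times> real" where "hlim x = lim (\<lambda>n. hs n x)"

lemma hlim_tends: "x \<in> X \<Longrightarrow> (\<lambda>n. hs n x) \<longlonglongrightarrow> hlim x"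
  unfolding hlim_def using hs_Cauchy Cauchy_convergent_iff convergent_LIMSEQ_iff by blast

lemma hlim_bound: assumes x: "x \<in> X" shows "dist (hlim x) (hs n x) \<le> (1/2) ^ n"
proof (rule LIMSEQ_le_const2)
  show "(\<lambda>k. dist (hs k x) (hs n x)) \<longlonglongrightarrow> dist (hlim x) (hs n x)"
    by (intro tendsto_intros hlim_tends[OF x])
  show "\<exists>N. \<forall>k\<ge>N. dist (hs k x) (hs n x) \<le> (1/2) ^ n"
  proof (intro exI[of _ n] allI impI)
    fix k assume "n \<le> k"
    then have "k = n + (k - n)" by simp
    then show "dist (hs k x) (hs n x) \<le> (1/2) ^ n" using hs_cauchy[OF x, of n "k - n"] by simp
  qed
qed

lemma hlim_pres: "pres T L R hlim"
proof -
  have c: "hlim w = v" if "w \<in> X" "\<And>n. hs n w = v" for w v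
  proof -
    have "(\<lambda>n. v) \<longlonglongrightarrow> hlim w" using hlim_tends[OF that(1)] that(2) by simp
    then show ?thesis by (simp add: LIMSEQ_const_iff)
  qed
  show ?thesis using c[OF TLR(1), of gT] c[OF TLR(2), of gL] c[OF TLR(3), of gR] hs_pres
    unfolding pres_def by simp
qed

lemma hlim_gasket: assumes x: "x \<in> X" shows "hlim x \<in> gasket"
proof -
  have "hlim x \<in> Tn k" for k
  proof (rule Lim_in_closed_set[OF compact_imp_closed[OF compact_Tn]])
    show "eventually (\<lambda>n. hs n x \<in> Tn k) sequentially"
    proof (rule eventually_sequentiallyI[of k])
      fix n assume "k \<le> n"
      then show "hs n x \<in> Tn k" using hs_Tn[OF x, of n] Tn_anti[of k n] by blast
    qed
    show "(sequentially::nat filter) \<noteq> bot" by simp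
    show "(\<lambda>n. hs n x) \<longlonglongrightarrow> hlim x" by (rule hlim_tends[OF x])
  qed
  then show ?thesis unfolding gasket_S0 S0_def by blast
qed

lemma hlim_cont: "gcont X d hlim"
  unfolding gcont_def
proof (intro ballI allI impI)
  fix x and \<epsilon> :: real assume x: "x \<in> X" and \<epsilon>: "\<epsilon> > 0"
  obtain n where n: "(1/2::real) ^ n < \<epsilon> / 3" using real_arch_pow_inv[of "\<epsilon>/3" "1/2"] \<epsilon> by auto
  obtain \<delta> where \<delta>: "\<delta> > 0" "\<forall>y\<in>X. d x y < \<delta> \<longrightarrow> dist (hs n x) (hs n y) < \<epsilon>/3"
  proof -
    have "\<epsilon>/3 > 0" using \<epsilon> by simp
    then show ?thesis using hs_cont[of n] x that unfolding gcont_def by blast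
  qed
  have "dist (hlim x) (hlim y) < \<epsilon>" if y: "y \<in> X" "d x y < \<delta>" for y
  proof -
    have "dist (hlim x) (hlim y) \<le> dist (hlim x) (hs n x) + dist (hs n x) (hs n y) + dist (hs n y) (hlim y)"
      using dist_triangle[of "hlim x" "hlim y" "hs n x"] dist_triangle[of "hs n x" "hlim y" "hs n y"] by linarith
    moreover have "dist (hs n y) (hlim y) \<le> (1/2)^n" using hlim_bound[OF y(1)] by (simp add: dist_commute)
    moreover have "dist (hs n x) (hs n y) < \<epsilon>/3" using \<delta>(2) y by blast
    moreover have "dist (hlim x) (hs n x) \<le> (1/2)^n" by (rule hlim_bound[OF x])
    ultimately show ?thesis using n by linarith
  qed
  then show "\<exists>\<delta>>0. \<forall>y\<in>X. d x y < \<delta> \<longrightarrow> dist (hlim x) (hlim y) < \<epsilon>" using \<delta>(1) by blast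
qed

lemma hlim_fix: assumes x: "x \<in> X" shows "Phi hlim x = hlim x"
proof -
  have "dist (Phi hlim x) (hlim x) \<le> (1/2) ^ n" for n
  proof -
    have "dist (Phi hlim x) (Phi (hs n) x) \<le> (1/2)^n / 2"
      by (rule Phi_contr[OF hlim_pres hs_pres hlim_bound x])
    moreover have "Phi (hs n) = hs (Suc n)" by (simp add: hs_def)
    moreover have "dist (hs (Suc n) x) (hlim x) \<le> (1/2)^(Suc n)" using hlim_bound[OF x, of "Suc n"] by (simp add: dist_commute)
    ultimately show ?thesis using dist_triangle[of "Phi hlim x" "hlim x" "hs (Suc n) x"] by simp
  qed
  then have "dist (Phi hlim x) (hlim x) \<le> 0" by (rule half_pow_small)
  then show ?thesis by simp
qed

lemma hlim_mor: "coalg_mor X d T L R e gasket dist gT gL gR gsigma hlim"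
  unfolding coalg_mor_def met3_mor_def metric_cont_def
proof (intro conjI)
  show "hlim ` X \<subseteq> gasket" using hlim_gasket by blast
  show "\<forall>x\<in>X. \<forall>e>0. \<exists>\<delta>>0. \<forall>y\<in>X. d x y < \<delta> \<longrightarrow> dist (hlim x) (hlim y) < e"
    using hlim_cont unfolding gcont_def .
  show "hlim T = gT" "hlim L = gL" "hlim R = gR" using hlim_pres unfolding pres_def by auto
  show "\<forall>x\<in>X. gsigma (hlim x) = tens_map gasket gT gL gR hlim (e x)"
  proof
    fix x assume x: "x \<in> X"
    obtain m x' where r: "x' \<in> X" "(m, x') \<in> e x" "e x = tens_el X T L R m x'" using rep[OF x] .
    have "hlim x = sig m (hlim x')" using hlim_fix[OF x] Phi_eq[OF hlim_pres x r(2)] by simp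
    then have "gsigma (hlim x) = Gel m (hlim x')" using gsigma_eq[OF hlim_gasket[OF r(1)]] by simp
    moreover have "tens_map gasket gT gL gR hlim (e x) = Gel m (hlim x')"
      unfolding r(3)
      by (rule tens_map_el[OF TLR vtx_gasket']) (use hlim_gasket hlim_pres r(1) in \<open>auto simp: pres_def\<close>)
    ultimately show "gsigma (hlim x) = tens_map gasket gT gL gR hlim (e x)" by simp
  qed
qed

lemma hlim_unique:
  assumes h': "coalg_mor X d T L R e gasket dist gT gL gR gsigma h'" and x: "x \<in> X"
  shows "h' x = hlim x"
proof -
  have img: "h' ` X \<subseteq> gasket" and pr: "pres T L R h'"
    and eq: "\<And>x. x \<in> X \<Longrightarrow> gsigma (h' x) = tens_map gasket gT gL gR h' (e x)"
    using h' unfolding coalg_mor_def met3_mor_def metric_cont_def pres_def by auto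
  have fix': "Phi h' y = h' y" if y: "y \<in> X" for y
  proof -
    obtain m y' where r: "y' \<in> X" "(m, y') \<in> e y" "e y = tens_el X T L R m y'" using rep[OF y] .
    have "tens_map gasket gT gL gR h' (e y) = Gel m (h' y')"
      unfolding r(3)
      by (rule tens_map_el[OF TLR vtx_gasket']) (use img pr r(1) in \<open>auto simp: pres_def\<close>)
    then have "gsigma (h' y) = Gel m (h' y')" using eq[OF y] by simp
    then have "gtau (gsigma (h' y)) = sig m (h' y')" using gtau_el[of "h' y'" m] img r(1) by auto
    moreover have "h' y \<in> gasket" using img y by blast
    then have "gtau (gsigma (h' y)) = h' y" by (rule gtau_gsigma)
    ultimately show ?thesis using Phi_eq[OF pr y r(2)] by simp
  qed
  have "dist (h' y) (hlim y) \<le> (1/2) ^ n" if "y \<in> X" for y n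
    using that
  proof (induction n arbitrary: y)
    case 0
    have "h' y \<in> gasket" using img 0 by blast
    then show ?case using gasket_diam hlim_gasket[OF 0] by simp
  next
    case (Suc n)
    have "dist (Phi h' y) (Phi hlim y) \<le> (1/2)^n / 2"
      by (rule Phi_contr[OF pr hlim_pres Suc.IH Suc.prems])
    then show ?case using fix'[OF Suc.prems] hlim_fix[OF Suc.prems] by simp
  qed
  then have "dist (h' x) (hlim x) \<le> 0" using x by (intro half_pow_small)
  then show ?thesis by simp
qed

end

theorem mainTheorem10:
  fixes X :: "'a set" and d :: "'a \<Rightarrow> 'a \<Rightarrow> real" and T L R :: 'a
    and e :: "'a \<Rightarrow> (mlab \<times> 'a) set"
  shows "coalg gasket dist gT gL gR gsigma \<and>
    (coalg X d T L R e \<longrightarrow>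
      (\<exists>h. coalg_mor X d T L R e gasket dist gT gL gR gsigma h \<and>
        (\<forall>h'. coalg_mor X d T L R e gasket dist gT gL gR gsigma h' \<longrightarrow> (\<forall>x\<in>X. h' x = h x))))"
proof (intro conjI impI)
  show "coalg gasket dist gT gL gR gsigma" by (rule coalg_gasket)
next
  assume "coalg X d T L R e"
  then interpret C: coal X d T L R e by unfold_locales
  show "\<exists>h. coalg_mor X d T L R e gasket dist gT gL gR gsigma h \<and>
        (\<forall>h'. coalg_mor X d T L R e gasket dist gT gL gR gsigma h' \<longrightarrow> (\<forall>x\<in>X. h' x = h x))"
    using C.hlim_mor C.hlim_unique by blast
qed



end
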